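(* Let $n$ be even, $V=V_1\sqcup V_2$ with $|V_1|=|V_2|=n/2$, and $0\le q<p\le 1$. Consider the complete weighted graph on $V$ with $w(u,v)=p$ for distinct $u,v$ in the same block, $w(u,v)=q$ for $u,v$ in different blocks, and $w(v,v)=0$, and the cost $c(\{A,A^\complement\})=\sum_{u\in A,v\in A^\complement}w(u,v)$ of a cut. Let $P=\{A,A^\complement\}$ be a cut of $V$, and let $\alpha_i=|A\cap V_i|/|V_i|$ and $\beta_i=|A^\complement\cap V_i|/|V_i|=1-\alpha_i$ for $i=1,2$. If $\alpha_2\ge(1-2\alpha_1)q/p$, then $c(\{A\cup V_2,A^\complement\setminus V_2\})\le c(P)$. Similarly, if $\beta_2\ge(1-2\beta_1)q/p$, then $c(\{A\setminus V_2,A^\complement\cup V_2\})\le c(P)$. *)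

theory Defs
  imports Complex_Main
begin

definition sbm_weight :: "'a set \<Rightarrow> 'a set \<Rightarrow> real \<Rightarrow> real \<Rightarrow> 'a \<Rightarrow> 'a \<Rightarrow> real" where
  "sbm_weight V1 V2 p q u v =
     (if u = v then 0
      else if (u \<in> V1 \<and> v \<in> V1) \<or> (u \<in> V2 \<and> v \<in> V2) then p
      else q)"

definition cut_cost :: "('a \<Rightarrow> 'a \<Rightarrow> real) \<Rightarrow> 'a set \<Rightarrow> 'a set \<Rightarrow> real" where
  "cut_cost w V A = (\<Sum>u\<in>A. \<Sum>v\<in>V - A. w u v)"

end

theory Submission
  imports Defs
begin

lemma cost_formula:
  assumes f1: "finite V1" and f2: "finite V2" and d: "V1 \<inter> V2 = {}"
    and AV: "A \<subseteq> V1 \<union> V2"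
  shows "cut_cost (sbm_weight V1 V2 p q) (V1 \<union> V2) A =
     p * (real (card (A \<inter> V1)) * real (card (V1 - A)) + real (card (A \<inter> V2)) * real (card (V2 - A)))
   + q * (real (card (A \<inter> V1)) * real (card (V2 - A)) + real (card (A \<inter> V2)) * real (card (V1 - A)))"
proof -
  let ?w = "sbm_weight V1 V2 p q"
  have split: "V1 \<union> V2 - A = (V1 - A) \<union> (V2 - A)" by blast
  have dj: "(V1 - A) \<inter> (V2 - A) = {}" using d by blast
  have in1: "(\<Sum>v\<in>V1 \<union> V2 - A. ?w u v) = p * card (V1 - A) + q * card (V2 - A)"
    if "u \<in> A" "u \<in> V1" for u
  proof -
    have "(\<Sum>v\<in>V1 \<union> V2 - A. ?w u v) = (\<Sum>v\<in>V1 - A. ?w u v) + (\<Sum>v\<in>V2 - A. ?w u v)"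
      unfolding split using f1 f2 dj by (simp add: sum.union_disjoint)
    also have "(\<Sum>v\<in>V1 - A. ?w u v) = (\<Sum>v\<in>V1 - A. p)"
      using that by (intro sum.cong) (auto simp: sbm_weight_def)
    also have "(\<Sum>v\<in>V2 - A. ?w u v) = (\<Sum>v\<in>V2 - A. q)"
      using that d by (intro sum.cong) (auto simp: sbm_weight_def)
    finally show ?thesis by (simp add: mult.commute)
  qed
  have in2: "(\<Sum>v\<in>V1 \<union> V2 - A. ?w u v) = q * card (V1 - A) + p * card (V2 - A)"
    if "u \<in> A" "u \<in> V2" for u
  proof -
    have "(\<Sum>v\<in>V1 \<union> V2 - A. ?w u v) = (\<Sum>v\<in>V1 - A. ?w u v) + (\<Sum>v\<in>V2 - A. ?w u v)"
      unfolding split using f1 f2 dj by (simp add: sum.union_disjoint)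
    also have "(\<Sum>v\<in>V1 - A. ?w u v) = (\<Sum>v\<in>V1 - A. q)"
      using that d by (intro sum.cong) (auto simp: sbm_weight_def)
    also have "(\<Sum>v\<in>V2 - A. ?w u v) = (\<Sum>v\<in>V2 - A. p)"
      using that by (intro sum.cong) (auto simp: sbm_weight_def)
    finally show ?thesis by (simp add: mult.commute)
  qed
  have As: "A = (A \<inter> V1) \<union> (A \<inter> V2)" using AV by blast
  have "cut_cost ?w (V1 \<union> V2) A = (\<Sum>u\<in>A \<inter> V1. \<Sum>v\<in>V1 \<union> V2 - A. ?w u v) + (\<Sum>u\<in>A \<inter> V2. \<Sum>v\<in>V1 \<union> V2 - A. ?w u v)"
    unfolding cut_cost_def using f1 f2 d
    by (subst As, subst sum.union_disjoint) auto
  also have "(\<Sum>u\<in>A \<inter> V1. \<Sum>v\<in>V1 \<union> V2 - A. ?w u v) = (\<Sum>u\<in>A \<inter> V1. p * card (V1 - A) + q * card (V2 - A))"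
    using in1 by (intro sum.cong) auto
  also have "(\<Sum>u\<in>A \<inter> V2. \<Sum>v\<in>V1 \<union> V2 - A. ?w u v) = (\<Sum>u\<in>A \<inter> V2. q * card (V1 - A) + p * card (V2 - A))"
    using in2 by (intro sum.cong) auto
  finally show ?thesis by (simp add: algebra_simps)
qed

lemma key_ineq:
  fixes m x y p q :: real
  assumes "m > 0" "p > 0" "x / m \<ge> (1 - 2 * (y / m)) * q / p"
  shows "p * x \<ge> q * (m - 2 * y)"
proof -
  have "(1 - 2 * (y / m)) * q / p = (m - 2 * y) * q / (m * p)"
    using assms by (simp add: field_simps)
  with assms(3) have "x / m \<ge> (m - 2 * y) * q / (m * p)" by simp
  hence "x / m * (m * p) \<ge> (m - 2 * y) * q / (m * p) * (m * p)"
    using assms by (intro mult_right_mono) auto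
  moreover have "x / m * (m * p) = p * x" using assms by (simp add: field_simps)
  moreover have "(m - 2 * y) * q / (m * p) * (m * p) = q * (m - 2 * y)" using assms by (simp add: field_simps)
  ultimately show ?thesis by simp
qed

theorem lemma3:
  fixes V1 V2 A :: "'a set" and n :: nat and p q :: real
  assumes "even n"
    and "finite V1" and "finite V2" and "V1 \<inter> V2 = {}"
    and "card V1 = n div 2" and "card V2 = n div 2"
    and "0 \<le> q" and "q < p" and "p \<le> 1"
    and "A \<subseteq> V1 \<union> V2" and "A \<noteq> {}" and "A \<noteq> V1 \<union> V2"
  shows
    "(real (card (A \<inter> V2)) / real (card V2)
        \<ge> (1 - 2 * (real (card (A \<inter> V1)) / real (card V1))) * q / p
      \<longrightarrow> cut_cost (sbm_weight V1 V2 p q) (V1 \<union> V2) (A \<union> V2)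
          \<le> cut_cost (sbm_weight V1 V2 p q) (V1 \<union> V2) A)
   \<and> (real (card ((V1 \<union> V2 - A) \<inter> V2)) / real (card V2)
        \<ge> (1 - 2 * (real (card ((V1 \<union> V2 - A) \<inter> V1)) / real (card V1))) * q / p
      \<longrightarrow> cut_cost (sbm_weight V1 V2 p q) (V1 \<union> V2) (A - V2)
          \<le> cut_cost (sbm_weight V1 V2 p q) (V1 \<union> V2) A)"
proof -
  define m where "m = card V1"
  have m2: "card V2 = m" using assms m_def by simp
  have mpos: "m > 0"
  proof (rule ccontr)
    assume "\<not> m > 0"
    hence "V1 = {}" "V2 = {}" using m2 m_def assms(2,3) by auto
    thus False using assms(10,11) by auto
  qed
  define a1 where "a1 = card (A \<inter> V1)"
  define a2 where "a2 = card (A \<inter> V2)"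
  define b1 where "b1 = card (V1 - A)"
  define b2 where "b2 = card (V2 - A)"
  have s1: "real a1 + real b1 = real m"
  proof -
    have "card (A \<inter> V1) + card (V1 - A) = card V1"
      using assms(2) card_Int_Diff[of V1 A] by (simp add: Int_commute)
    thus ?thesis unfolding a1_def b1_def m_def by (metis of_nat_add)
  qed
  have s2: "real a2 + real b2 = real m"
  proof -
    have "card (A \<inter> V2) + card (V2 - A) = card V2"
      using assms(3) card_Int_Diff[of V2 A] by (simp add: Int_commute)
    thus ?thesis unfolding a2_def b2_def m2 by (metis of_nat_add)
  qed
  have cA: "cut_cost (sbm_weight V1 V2 p q) (V1 \<union> V2) A =
     p * (real a1 * real b1 + real a2 * real b2) + q * (real a1 * real b2 + real a2 * real b1)"
    unfolding a1_def a2_def b1_def b2_def using cost_formula assms by blast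
  have cB: "cut_cost (sbm_weight V1 V2 p q) (V1 \<union> V2) (A \<union> V2) =
     p * (real a1 * real b1) + q * (real m * real b1)"
  proof -
    have e1: "(A \<union> V2) \<inter> V1 = A \<inter> V1" "(A \<union> V2) \<inter> V2 = V2" "V1 - (A \<union> V2) = V1 - A" "V2 - (A \<union> V2) = {}"
      using assms(4) by auto
    show ?thesis using cost_formula[of V1 V2 "A \<union> V2" p q] assms
      unfolding e1 a1_def b1_def m2 by auto
  qed
  have cC: "cut_cost (sbm_weight V1 V2 p q) (V1 \<union> V2) (A - V2) =
     p * (real a1 * real b1) + q * (real a1 * real m)"
  proof -
    have e1: "(A - V2) \<inter> V1 = A \<inter> V1" "(A - V2) \<inter> V2 = {}" "V1 - (A - V2) = V1 - A" "V2 - (A - V2) = V2"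
      using assms(4) by auto
    show ?thesis using cost_formula[of V1 V2 "A - V2" p q] assms
      unfolding e1 a1_def b1_def m2 by auto
  qed
  have pp: "p > 0" using assms by linarith
  show ?thesis
  proof (intro conjI impI)
    assume h: "real (card (A \<inter> V2)) / real (card V2)
        \<ge> (1 - 2 * (real (card (A \<inter> V1)) / real (card V1))) * q / p"
    have h': "real a2 / real m \<ge> (1 - 2 * (real a1 / real m)) * q / p"
      using h m2 unfolding a1_def a2_def m_def by simp
    have k: "p * a2 \<ge> q * (real m - 2 * real a1)"
      using key_ineq[OF _ pp h'] mpos by simp
    have "0 \<le> real b2 * (p * a2 - q * (real m - 2 * real a1))"
      using k by simp
    thus "cut_cost (sbm_weight V1 V2 p q) (V1 \<union> V2) (A \<union> V2)
          \<le> cut_cost (sbm_weight V1 V2 p q) (V1 \<union> V2) A"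
    proof -
      have b1e: "real b1 = real m - real a1" "real b2 = real m - real a2" using s1 s2 by linarith+
      have "p * (real a1 * real b1 + real a2 * real b2) + q * (real a1 * real b2 + real a2 * real b1)
         - (p * (real a1 * real b1) + q * (real m * real b1)) = real b2 * (p * a2 - q * (real m - 2 * real a1))"
        unfolding b1e by algebra
      thus ?thesis unfolding cA cB using \<open>0 \<le> real b2 * _\<close> by linarith
    qed
  next
    assume h: "real (card ((V1 \<union> V2 - A) \<inter> V2)) / real (card V2)
        \<ge> (1 - 2 * (real (card ((V1 \<union> V2 - A) \<inter> V1)) / real (card V1))) * q / p"
    have e: "(V1 \<union> V2 - A) \<inter> V2 = V2 - A" "(V1 \<union> V2 - A) \<inter> V1 = V1 - A" by auto
    have h': "real b2 / real m \<ge> (1 - 2 * (real b1 / real m)) * q / p"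
      using h m2 unfolding e b1_def b2_def m_def by simp
    have k: "p * b2 \<ge> q * (real m - 2 * real b1)"
      using key_ineq[OF _ pp h'] mpos by simp
    have "0 \<le> real a2 * (p * b2 - q * (real m - 2 * real b1))"
      using k by simp
    thus "cut_cost (sbm_weight V1 V2 p q) (V1 \<union> V2) (A - V2)
          \<le> cut_cost (sbm_weight V1 V2 p q) (V1 \<union> V2) A"
    proof -
      have b1e: "real a1 = real m - real b1" "real a2 = real m - real b2" using s1 s2 by linarith+
      have "p * (real a1 * real b1 + real a2 * real b2) + q * (real a1 * real b2 + real a2 * real b1)
         - (p * (real a1 * real b1) + q * (real a1 * real m)) = real a2 * (p * b2 - q * (real m - 2 * real b1))"
        unfolding b1e by algebra
      thus ?thesis unfolding cA cC using \<open>0 \<le> real a2 * _\<close> by linarith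
    qed
  qed
qed

end
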